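(* Let $n\ge0$, $H\ge0$ and $0\le i\le n$ be integers, and put $R_4(\varepsilon)=\binom{n+i+\varepsilon}{n}\binom{2n-i-\varepsilon}{n}$. Then $\tilde\Phi_n^{-1}d_n^{H}\frac1{H!}\frac{\partial^H}{\partial\varepsilon^H}R_4(\varepsilon)\big|_{\varepsilon=0}$ is an integer, where $\tilde\Phi_n=\prod_{p\text{ prime},\ p<n,\ \{n/p\}\in[2/3,1)}p$.
   Context: For complex $x$ and integer $m\ge0$, $\binom xm=x(x-1)\cdots(x-m+1)/m!$. $d_n=\operatorname{lcm}(1,\dots,n)$, $d_0=1$; $\{x\}$ is the fractional part of $x$; an empty product equals $1$. *)

theory Defs
  imports "HOL-Analysis.Analysis" "HOL-Computational_Algebra.Primes"
begin

definition d_lcm :: "nat \<Rightarrow> nat" where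
  "d_lcm n = Lcm {1..n}"

definition Phi_tilde :: "nat \<Rightarrow> nat" where
  "Phi_tilde n = (\<Prod>p\<in>{p. prime p \<and> p < n \<and> frac (real n / real p) \<ge> 2/3 \<and> frac (real n / real p) < 1}. p)"

definition R4 :: "nat \<Rightarrow> nat \<Rightarrow> complex \<Rightarrow> complex" where
  "R4 n i \<epsilon> = ((of_nat n + of_nat i + \<epsilon>) gchoose n) * ((2 * of_nat n - of_nat i - \<epsilon>) gchoose n)"

end

theory Submission imports Defs "HOL-Computational_Algebra.Polynomial" "HOL-Computational_Algebra.Formal_Power_Series" begin

lemma choose_prime_dvd:
  fixes p :: nat
  assumes "prime p"
  shows "N mod p < K mod p \<Longrightarrow> p dvd (N choose K)"
proof (induction N arbitrary: K)
  case 0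
  then show ?case by (cases K) auto
next
  case (Suc N)
  have p1: "p > 1" using assms prime_gt_1_nat by blast
  have K0: "K > 0" using Suc.prems by (cases K) auto
  have pK: "\<not> p dvd K" using Suc.prems by (simp add: dvd_eq_mod_eq_0)
  have eq: "K * (Suc N choose K) = Suc N * (N choose (K - 1))"
    using times_binomial_minus1_eq[OF K0, of "Suc N"] by simp
  have "p dvd Suc N * (N choose (K - 1))"
  proof (cases "Suc N mod p = 0")
    case True
    then have "p dvd Suc N" by (simp add: dvd_eq_mod_eq_0 del: mod_Suc)
    then show ?thesis by (rule dvd_mult2)
  next
    case False
    have a: "N mod p = Suc N mod p - 1"
      using False p1 by (metis Suc_diff_1 bot_nat_0.not_eq_extremum diff_Suc_1 mod_Suc)
    have b: "(K - 1) mod p = K mod p - 1"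
      using pK K0 p1 by (metis Suc_diff_1 dvd_eq_mod_eq_0 mod_Suc diff_Suc_1 gr0I)
    have "N mod p < (K - 1) mod p" using a b Suc.prems False by linarith
    from Suc.IH[OF this] show ?thesis by simp
  qed
  then have "p dvd K * (Suc N choose K)" using eq by simp
  then show ?case using pK assms prime_dvd_mult_iff by blast
qed

lemma frac_div_nat:
  fixes n p :: nat assumes "p > 0"
  shows "frac (real n / real p) = real (n mod p) / real p"
proof -
  have e: "real n = real p * real (n div p) + real (n mod p)"
    by (simp flip: of_nat_mult of_nat_add)
  have "real n / real p = real (n div p) + real (n mod p) / real p"
    using assms unfolding e by (simp add: field_simps)
  moreover have "real (n mod p) / real p < 1" using assms by simp
  moreover have "real (n mod p) / real p \<ge> 0" by simp
  ultimately have "frac (real n / real p) = frac (real (n mod p) / real p)"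
    by (metis frac_add_of_int_left of_int_of_nat_eq)
  then show ?thesis using \<open>real (n mod p) / real p < 1\<close> by (simp add: frac_eq)
qed

lemma carry_lemma:
  fixes n i p :: nat
  assumes "p > 0" "i \<le> n" "3 * (n mod p) \<ge> 2 * p"
  shows "(n + i) mod p < n mod p \<or> (2 * n - i) mod p < n mod p"
proof (rule ccontr)
  assume H: "\<not> ?thesis"
  define r where "r = n mod p"
  define u where "u = (n + i) mod p"
  define v where "v = (2 * n - i) mod p"
  have ur: "u \<ge> r" "v \<ge> r" using H u_def v_def r_def by auto
  have up: "u < p" "v < p" using assms u_def v_def by auto
  have rp: "r < p" using assms r_def by auto
  have "(u + v) mod p = ((n + i) + (2 * n - i)) mod p" unfolding u_def v_def by (simp add: mod_add_eq)
  also have "(n + i) + (2 * n - i) = 3 * n" using assms by simp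
  also have "3 * n mod p = (3 * r) mod p" unfolding r_def by (simp add: mod_mult_right_eq)
  finally have c: "int (u + v) mod int p = int (3 * r) mod int p" by (metis of_nat_mod)
  then obtain k :: int where k: "int (u + v) = int (3 * r) + int p * k"
    by (metis mod_eqE dvd_def add_diff_cancel_left' diff_add_cancel)
  show False
  proof (cases "k \<ge> 0")
    case True
    then have "int p * k \<ge> 0" by simp
    then show ?thesis using k up ur assms(3) r_def by linarith
  next
    case False
    then have "int p * k \<le> - int p" using mult_left_mono[of k "-1" "int p"] by simp
    then show ?thesis using k up ur rp by linarith
  qed
qed


lemma gchoose_step:
  fixes a :: complex
  shows "(a gchoose Suc k) = (a gchoose k) * (a - of_nat k) / of_nat (Suc k)"
proof -
  have "(a gchoose Suc k) * fact (Suc k) = (a gchoose k) * fact k * (a - of_nat k)"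
    unfolding gbinomial_mult_fact' by simp
  then have "fact k * ((a gchoose Suc k) * of_nat (Suc k)) = fact k * ((a gchoose k) * (a - of_nat k))"
    by (simp only: fact_Suc of_nat_mult) (simp add: algebra_simps)
  then have "(a gchoose Suc k) * of_nat (Suc k) = (a gchoose k) * (a - of_nat k)"
    by (subst (asm) mult_left_cancel) auto
  then show ?thesis by (simp add: field_simps del: of_nat_Suc)
qed

lemma gchoose_split:
  fixes a :: complex
  shows "(a gchoose Suc k) = a / of_nat (Suc k) * (\<Prod>l\<in>{1..<Suc k}. (a - of_nat l) / of_nat l)"
proof (induction k)
  case 0
  then show ?case by simp
next
  case (Suc k)
  have "(a gchoose Suc (Suc k)) = (a gchoose Suc k) * (a - of_nat (Suc k)) / of_nat (Suc (Suc k))"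
    by (rule gchoose_step)
  also have "\<dots> = a / of_nat (Suc k) * (\<Prod>l\<in>{1..<Suc k}. (a - of_nat l) / of_nat l)
      * (a - of_nat (Suc k)) / of_nat (Suc (Suc k))" by (simp add: Suc.IH)
  also have "\<dots> = a / of_nat (Suc (Suc k)) * ((\<Prod>l\<in>{1..<Suc k}. (a - of_nat l) / of_nat l)
      * ((a - of_nat (Suc k)) / of_nat (Suc k)))"
    by (simp add: field_simps)
  also have "\<dots> = a / of_nat (Suc (Suc k)) * (\<Prod>l\<in>{1..<Suc (Suc k)}. (a - of_nat l) / of_nat l)"
    by (subst prod.atLeastLessThan_Suc) auto
  finally show ?case .
qed

lemma deriv_funpow_poly:
  fixes P :: "complex poly"
  shows "(deriv ^^ H) (poly P) = poly ((pderiv ^^ H) P)"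
proof (induction H)
  case 0 then show ?case by simp
next
  case (Suc H)
  have "(deriv ^^ Suc H) (poly P) = deriv (poly ((pderiv ^^ H) P))" using Suc by simp
  also have "\<dots> = poly (pderiv ((pderiv ^^ H) P))"
    by (rule ext, rule DERIV_imp_deriv, rule poly_DERIV)
  finally show ?case by simp
qed

lemma deriv_coeff:
  fixes P :: "complex poly"
  shows "(deriv ^^ H) (poly P) 0 = fact H * coeff P H"
  by (simp add: deriv_funpow_poly poly_0_coeff_0 coeff_higher_pderiv pochhammer_fact)

definition IntP :: "complex poly \<Rightarrow> bool" where
  "IntP P \<longleftrightarrow> (\<forall>k. coeff P k \<in> \<int>)"

definition PdvP :: "nat \<Rightarrow> complex poly \<Rightarrow> bool" where
  "PdvP p P \<longleftrightarrow> (\<exists>Q. IntP Q \<and> P = smult (of_nat p) Q)"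

lemma IntP_add: "IntP P \<Longrightarrow> IntP Q \<Longrightarrow> IntP (P + Q)"
  unfolding IntP_def by auto

lemma IntP_mult: "IntP P \<Longrightarrow> IntP Q \<Longrightarrow> IntP (P * Q)"
  unfolding IntP_def coeff_mult by (auto intro!: Ints_sum Ints_mult)

lemma IntP_smult: "c \<in> \<int> \<Longrightarrow> IntP Q \<Longrightarrow> IntP (smult c Q)"
  unfolding IntP_def by auto

lemma IntP_1: "IntP 1"
  unfolding IntP_def by (auto simp: coeff_1)

lemma IntP_lin: "a \<in> \<int> \<Longrightarrow> b \<in> \<int> \<Longrightarrow> IntP [:a, b:]"
  unfolding IntP_def by (auto simp: coeff_pCons split: nat.splits)

lemma IntP_prod: "(\<And>x. x \<in> A \<Longrightarrow> IntP (f x)) \<Longrightarrow> IntP (\<Prod>x\<in>A. f x)"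
  by (induction A rule: infinite_finite_induct) (auto simp: IntP_1 IntP_mult)

lemma IntP_sum: "(\<And>x. x \<in> A \<Longrightarrow> IntP (f x)) \<Longrightarrow> IntP (\<Sum>x\<in>A. f x)"
  by (induction A rule: infinite_finite_induct) (auto simp: IntP_add, auto simp: IntP_def)

lemma PdvP_add: "PdvP p P \<Longrightarrow> PdvP p Q \<Longrightarrow> PdvP p (P + Q)"
  unfolding PdvP_def by (metis IntP_add smult_add_right)

lemma PdvP_sum: "(\<And>x. x \<in> A \<Longrightarrow> PdvP p (f x)) \<Longrightarrow> PdvP p (\<Sum>x\<in>A. f x)"
proof (induction A rule: infinite_finite_induct)
  case (infinite A)
  then show ?case unfolding PdvP_def by (auto intro!: exI[of _ 0] simp: IntP_def)
next
  case empty
  then show ?case unfolding PdvP_def by (auto intro!: exI[of _ 0] simp: IntP_def)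
next
  case (insert x F)
  then show ?case by (auto intro: PdvP_add)
qed

lemma PdvP_mult: "PdvP p P \<Longrightarrow> IntP R \<Longrightarrow> PdvP p (P * R)"
  unfolding PdvP_def by (metis IntP_mult mult_smult_left)

lemma PdvP_mult2: "PdvP p P \<Longrightarrow> IntP R \<Longrightarrow> PdvP p (R * P)"
  by (simp add: PdvP_mult mult.commute)

lemma PdvP_smult_nat: "IntP Q \<Longrightarrow> p dvd c \<Longrightarrow> PdvP p (smult (of_nat c) Q)"
  unfolding PdvP_def
proof -
  assume "IntP Q" "p dvd c"
  then obtain e where "c = p * e" by blast
  then have "smult (of_nat c) Q = smult (of_nat p) (smult (of_nat e) Q)" by simp
  moreover have "IntP (smult (of_nat e) Q)" using \<open>IntP Q\<close> by (simp add: IntP_smult)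
  ultimately show "\<exists>Qa. IntP Qa \<and> smult (of_nat c) Q = smult (of_nat p) Qa" by blast
qed

lemma PdvP_smult: "PdvP p Q \<Longrightarrow> c \<in> \<int> \<Longrightarrow> PdvP p (smult c Q)"
  unfolding PdvP_def by (metis IntP_smult smult_smult mult.commute)

definition Gc :: "int \<Rightarrow> nat \<Rightarrow> nat \<Rightarrow> complex poly" where
  "Gc \<sigma> D j = (if j = 0 then 1 else smult (of_nat (D div j))
      ([:0, of_int \<sigma>:] * (\<Prod>l\<in>{1..<j}. [:-1, of_int \<sigma> * of_nat (D div l):])))"

definition Ac :: "int \<Rightarrow> nat \<Rightarrow> nat \<Rightarrow> nat \<Rightarrow> complex poly" where
  "Ac \<sigma> D m n = (\<Sum>j\<in>{0..n}. smult (of_nat (m choose (n - j))) (Gc \<sigma> D j))"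

lemma Rest_IntP: "IntP ([:0, of_int \<sigma>:] * (\<Prod>l\<in>{1..<j}. [:-1, of_int \<sigma> * of_nat (D div l):]))"
  by (intro IntP_mult IntP_lin IntP_prod) auto

lemma Gc_IntP: "IntP (Gc \<sigma> D j)"
proof (cases "j = 0")
  case True then show ?thesis by (simp add: Gc_def IntP_1)
next
  case False
  then show ?thesis unfolding Gc_def by (simp only: if_False) (rule IntP_smult[OF _ Rest_IntP], simp)
qed

lemma Ac_IntP: "IntP (Ac \<sigma> D m n)"
  unfolding Ac_def by (intro IntP_sum IntP_smult Gc_IntP) auto

lemma of_nat_div_dvd: "l dvd D \<Longrightarrow> (of_nat (D div l) :: complex) = of_nat D / of_nat l"
  by (cases "l = 0") (auto simp: of_nat_div)

lemma poly_Gc: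
  assumes "\<forall>l\<in>{1..j}. l dvd D"
  shows "poly (Gc \<sigma> D j) x = (of_int \<sigma> * of_nat D * x) gchoose j"
proof (cases j)
  case 0
  then show ?thesis by (simp add: Gc_def)
next
  case (Suc k)
  let ?a = "of_int \<sigma> * of_nat D * x :: complex"
  have j0: "j \<noteq> 0" using Suc by simp
  have "poly (Gc \<sigma> D j) x = of_nat (D div j) * (poly [:0, of_int \<sigma>:] x *
      (\<Prod>l\<in>{1..<j}. poly [:-1, of_int \<sigma> * of_nat (D div l):] x))"
    using j0 by (simp only: Gc_def if_False poly_smult poly_mult poly_prod)
  also have "(\<Prod>l\<in>{1..<j}. poly [:-1, of_int \<sigma> * of_nat (D div l):] x) =
      (\<Prod>l\<in>{1..<j}. (?a - of_nat l) / of_nat l)"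
  proof (rule prod.cong)
    fix l assume l: "l \<in> {1..<j}"
    then have "l dvd D" using assms by auto
    moreover have "(of_nat l :: complex) \<noteq> 0" using l by auto
    ultimately show "poly [:-1, of_int \<sigma> * of_nat (D div l):] x = (?a - of_nat l) / of_nat l"
      by (simp add: of_nat_div_dvd field_simps)
  qed simp
  also have "of_nat (D div j) * (poly [:0, of_int \<sigma>:] x * (\<Prod>l\<in>{1..<j}. (?a - of_nat l) / of_nat l))
     = ?a / of_nat j * (\<Prod>l\<in>{1..<j}. (?a - of_nat l) / of_nat l)"
  proof -
    have "j dvd D" using assms j0 by auto
    then have "of_nat (D div j) * (poly [:0, of_int \<sigma>:] x) = ?a / of_nat j"
      by (simp add: of_nat_div_dvd)
    then show ?thesis by (simp only: mult.assoc[symmetric])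
  qed
  also have "\<dots> = ?a gchoose j" using Suc gchoose_split[of ?a k] by simp
  finally show ?thesis .
qed

lemma poly_Ac:
  assumes "\<forall>l\<in>{1..n}. l dvd D"
  shows "poly (Ac \<sigma> D m n) x = (of_nat m + of_int \<sigma> * of_nat D * x) gchoose n"
proof -
  have "poly (Ac \<sigma> D m n) x = (\<Sum>j\<in>{0..n}. ((of_int \<sigma> * of_nat D * x) gchoose j) * (of_nat m gchoose (n - j)))"
    unfolding Ac_def poly_sum
    by (rule sum.cong) (use assms in \<open>auto simp: poly_Gc binomial_gbinomial\<close>)
  also have "\<dots> = (of_int \<sigma> * of_nat D * x + of_nat m) gchoose n"
    by (rule gbinomial_Vandermonde)
  finally show ?thesis by (simp add: add.commute)
qed

lemma PdvP_Ac:
  assumes p: "prime p" and pD: "p dvd D" and hD: "\<forall>l\<in>{1..n}. l dvd D" and mn: "m mod p < n mod p"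
  shows "PdvP p (Ac \<sigma> D m n)"
  unfolding Ac_def
proof (rule PdvP_sum)
  fix j assume j: "j \<in> {0..n}"
  show "PdvP p (smult (of_nat (m choose (n - j))) (Gc \<sigma> D j))"
  proof (cases "j = 0 \<or> p dvd j")
    case True
    have "(n - j) mod p = n mod p"
    proof (cases "j = 0")
      case False
      then obtain c where c: "j = p * c" using True by blast
      have "n mod p = ((n - j) + p * c) mod p" using j c by simp
      also have "\<dots> = (n - j) mod p" by simp
      finally show ?thesis by simp
    qed simp
    then have "p dvd (m choose (n - j))" using choose_prime_dvd[OF p] mn by simp
    then show ?thesis by (rule PdvP_smult_nat[OF Gc_IntP])
  next
    case False
    have "D = j * (D div j)" using hD j False by auto
    then have "p dvd j * (D div j)" using pD by simp
    then have "p dvd D div j" using False p prime_dvd_mult_iff by blast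
    then have "PdvP p (smult (of_nat (D div j))
      ([:0, of_int \<sigma>:] * (\<Prod>l\<in>{1..<j}. [:-1, of_int \<sigma> * of_nat (D div l):])))"
      by (rule PdvP_smult_nat[OF Rest_IntP])
    then have "PdvP p (Gc \<sigma> D j)" using False by (simp add: Gc_def)
    then show ?thesis by (rule PdvP_smult) simp
  qed
qed

lemma prod_primes_dvd_int:
  fixes S :: "nat set" and z :: int
  assumes "finite S" "\<forall>p\<in>S. prime p" "\<forall>p\<in>S. int p dvd z"
  shows "int (\<Prod>S) dvd z"
  using assms
proof (induction S rule: finite_induct)
  case empty then show ?case by simp
next
  case (insert p F)
  have pr: "prime p" using insert by simp
  have "\<not> p dvd \<Prod>F"
  proof
    assume "p dvd \<Prod>F"
    then obtain q where "q \<in> F" "p dvd q" using prime_dvd_prod_iff[OF insert(1) pr, of id] by auto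
    then have "p = q" using primes_dvd_imp_eq[OF pr] insert by auto
    then show False using insert \<open>q \<in> F\<close> by simp
  qed
  then have "coprime p (\<Prod>F)" using prime_imp_coprime[OF pr] by blast
  then have "coprime (int p) (int (\<Prod>F))" by (simp only: coprime_int_iff)
  moreover have "int (\<Prod>F) dvd z" using insert by simp
  moreover have "int p dvd z" using insert by simp
  ultimately have "int p * int (\<Prod>F) dvd z" by (intro divides_mult)
  then show ?case using insert by simp
qed

theorem mainTheorem18:
  fixes n H i :: nat
  assumes "i \<le> n"
  shows "of_nat (d_lcm n) ^ H * ((deriv ^^ H) (R4 n i) 0 / fact H) / of_nat (Phi_tilde n) \<in> \<int>"
proof -
  define D where "D = d_lcm n"
  have hD: "\<forall>l\<in>{1..n}. l dvd D" unfolding D_def d_lcm_def by auto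
  have D0: "D \<noteq> 0" unfolding D_def d_lcm_def by (subst Lcm_0_iff) auto
  define W where "W = Ac 1 D (n + i) n * Ac (-1) D (2 * n - i) n"
  have hW: "poly W x = R4 n i (of_nat D * x)" for x
    unfolding W_def R4_def using assms by (simp add: poly_Ac[OF hD] of_nat_diff)
  define P where "P = pcompose W [:0, 1 / of_nat D:]"
  have RP: "R4 n i = poly P"
  proof
    fix e
    have "poly P e = R4 n i (of_nat D * (e / of_nat D))"
      unfolding P_def poly_pcompose hW by simp
    then show "R4 n i e = poly P e" using D0 by simp
  qed
  have cP: "coeff P H = (1 / of_nat D) ^ H * coeff W H"
    unfolding P_def by (rule coeff_pcompose_linear)
  have IW: "IntP W" unfolding W_def by (intro IntP_mult Ac_IntP)
  then obtain z where z: "coeff W H = of_int z" unfolding IntP_def by (metis Ints_cases)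
  have lhs: "of_nat D ^ H * ((deriv ^^ H) (R4 n i) 0 / fact H) = (of_int z :: complex)"
    unfolding RP deriv_coeff cP z using D0 by (simp add: power_one_over)
  define S where "S = {p. prime p \<and> p < n \<and> frac (real n / real p) \<ge> 2/3 \<and> frac (real n / real p) < 1}"
  have "\<forall>p\<in>S. int p dvd z"
  proof
    fix p assume pS: "p \<in> S"
    then have p: "prime p" "p < n" "frac (real n / real p) \<ge> 2/3" unfolding S_def by auto
    have p0: "p > 0" using p(1) prime_gt_0_nat by blast
    have "real (n mod p) / real p \<ge> 2/3" using p(3) frac_div_nat[OF p0] by simp
    then have "3 * real (n mod p) \<ge> 2 * real p" using p0 by (simp add: field_simps)
    then have c3: "3 * (n mod p) \<ge> 2 * p" by linarith
    have "p \<in> {1..n}" using p0 p(2) by auto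
    then have pD: "p dvd D" using hD by blast
    have "PdvP p W"
      using carry_lemma[OF p0 assms c3]
    proof
      assume "(n + i) mod p < n mod p"
      then show ?thesis unfolding W_def by (intro PdvP_mult PdvP_Ac[OF p(1) pD hD] Ac_IntP)
    next
      assume "(2 * n - i) mod p < n mod p"
      then show ?thesis unfolding W_def by (intro PdvP_mult2 PdvP_Ac[OF p(1) pD hD] Ac_IntP)
    qed
    then obtain Q where Q: "IntP Q" "W = smult (of_nat p) Q" unfolding PdvP_def by blast
    then obtain w where w: "coeff Q H = of_int w" unfolding IntP_def by (metis Ints_cases)
    have "(of_int z :: complex) = of_int (int p * w)" using Q(2) z w
      by (metis coeff_smult of_int_mult of_int_of_nat_eq)
    then have "z = int p * w" by (simp only: of_int_eq_iff)
    then show "int p dvd z" by simp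
  qed
  moreover have "finite S" unfolding S_def by (rule finite_subset[of _ "{..<n}"]) auto
  ultimately have dv: "int (Phi_tilde n) dvd z"
    unfolding Phi_tilde_def S_def[symmetric] by (intro prod_primes_dvd_int) (auto simp: S_def)
  then obtain w where w: "z = int (Phi_tilde n) * w" by blast
  have "(of_int z :: complex) / of_nat (Phi_tilde n) = (if Phi_tilde n = 0 then 0 else of_int w)"
    unfolding w by simp
  then show ?thesis unfolding D_def[symmetric] lhs by (simp split: if_splits)
qed

end
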